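(* Let $ABC$ be a triangle with side lengths $a,b,c$, semiperimeter $s$, circumcenter $O$ and circumradius $R$. Let $P$ be a point with barycentric coordinates $t_1:t_2:t_3$ with respect to $ABC$, where $t_1,t_2,t_3>0$, and let $t=t_1+t_2+t_3$. Then $$R^2-OP^2\ge\frac{4s^2\,t_1t_2t_3}{t^3},$$ with equality if and only if $t_1:t_2:t_3=a:b:c$, i.e. $P$ is the incenter of $ABC$.
   Context: A point $P$ has barycentric coordinates $t_1:t_2:t_3$ (with $t_1+t_2+t_3\neq0$) with respect to triangle $ABC$ if $P=\frac{t_1A+t_2B+t_3C}{t_1+t_2+t_3}$ (as vectors). *)

theory Defs
  imports "HOL-Analysis.Analysis"
begin

end

theory Submission
  imports Defs
begin

lemma key_ineq:
  fixes a b c t1 t2 t3 :: real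
  assumes "t1 > 0" "t2 > 0" "t3 > 0"
  shows "(t1+t2+t3) * (t2*t3*a\<^sup>2 + t1*t3*b\<^sup>2 + t1*t2*c\<^sup>2) - (a+b+c)\<^sup>2 * t1*t2*t3
     = t3 * (a*t2 - b*t1)\<^sup>2 + t2 * (a*t3 - c*t1)\<^sup>2 + t1 * (b*t3 - c*t2)\<^sup>2"
  by (simp add: power2_eq_square algebra_simps)

theorem mainTheorem3:
  fixes A B C Oc P :: "real^2" and R t1 t2 t3 :: real
  assumes triangle: "\<not> collinear {A, B, C}"
    and circ: "dist Oc A = R" "dist Oc B = R" "dist Oc C = R"
    and pos: "t1 > 0" "t2 > 0" "t3 > 0"
    and P_def: "P = (1 / (t1 + t2 + t3)) *\<^sub>R (t1 *\<^sub>R A + t2 *\<^sub>R B + t3 *\<^sub>R C)"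
  shows "(R\<^sup>2 - (dist Oc P)\<^sup>2 \<ge>
           4 * ((dist B C + dist C A + dist A B) / 2)\<^sup>2 * t1 * t2 * t3 / (t1 + t2 + t3) ^ 3)
     \<and> (R\<^sup>2 - (dist Oc P)\<^sup>2 =
           4 * ((dist B C + dist C A + dist A B) / 2)\<^sup>2 * t1 * t2 * t3 / (t1 + t2 + t3) ^ 3
         \<longleftrightarrow> (\<exists>k > 0. t1 = k * dist B C \<and> t2 = k * dist C A \<and> t3 = k * dist A B))"
proof -
  define t where "t = t1 + t2 + t3"
  have tpos: "t > 0" using pos t_def by simp
  define u where "u = A - Oc"
  define v where "v = B - Oc"
  define w where "w = C - Oc"
  define a where "a = dist B C"
  define b where "b = dist C A"
  define c where "c = dist A B"
  have uu: "inner u u = R\<^sup>2" using circ(1) unfolding u_def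
    by (simp add: dist_norm norm_minus_commute flip: power2_norm_eq_inner)
  have vv: "inner v v = R\<^sup>2" using circ(2) unfolding v_def
    by (simp add: dist_norm norm_minus_commute flip: power2_norm_eq_inner)
  have ww: "inner w w = R\<^sup>2" using circ(3) unfolding w_def
    by (simp add: dist_norm norm_minus_commute flip: power2_norm_eq_inner)
  have a2: "a\<^sup>2 = inner v v + inner w w - 2 * inner v w"
  proof -
    have "B - C = v - w" unfolding v_def w_def by simp
    thus ?thesis unfolding a_def dist_norm power2_norm_eq_inner
      by (simp add: inner_diff_left inner_diff_right inner_commute)
  qed
  have b2: "b\<^sup>2 = inner u u + inner w w - 2 * inner u w"
  proof -
    have "C - A = w - u" unfolding u_def w_def by simp
    thus ?thesis unfolding b_def dist_norm power2_norm_eq_inner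
      by (simp add: inner_diff_left inner_diff_right inner_commute)
  qed
  have c2: "c\<^sup>2 = inner u u + inner v v - 2 * inner u v"
  proof -
    have "A - B = u - v" unfolding u_def v_def by simp
    thus ?thesis unfolding c_def dist_norm power2_norm_eq_inner
      by (simp add: inner_diff_left inner_diff_right inner_commute)
  qed
  have PO: "P - Oc = (1/t) *\<^sub>R (t1 *\<^sub>R u + t2 *\<^sub>R v + t3 *\<^sub>R w)"
  proof -
    have "(1/t) *\<^sub>R (t1 *\<^sub>R u + t2 *\<^sub>R v + t3 *\<^sub>R w)
        = (1/t) *\<^sub>R (t1 *\<^sub>R A + t2 *\<^sub>R B + t3 *\<^sub>R C) - (1/t) *\<^sub>R (t *\<^sub>R Oc)"
      unfolding u_def v_def w_def t_def by (simp add: algebra_simps)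
    also have "\<dots> = P - Oc" using tpos P_def t_def by simp
    finally show ?thesis by simp
  qed
  have OP2: "(dist Oc P)\<^sup>2 = (t1\<^sup>2 * inner u u + t2\<^sup>2 * inner v v + t3\<^sup>2 * inner w w
       + 2*t1*t2*inner u v + 2*t1*t3*inner u w + 2*t2*t3*inner v w) / t\<^sup>2"
  proof -
    have "dist Oc P = norm (P - Oc)" by (simp add: dist_norm norm_minus_commute)
    hence "(dist Oc P)\<^sup>2 = inner (P - Oc) (P - Oc)" by (simp flip: power2_norm_eq_inner)
    also have "\<dots> = (1/t)\<^sup>2 * inner (t1 *\<^sub>R u + t2 *\<^sub>R v + t3 *\<^sub>R w) (t1 *\<^sub>R u + t2 *\<^sub>R v + t3 *\<^sub>R w)"
      unfolding PO by (simp add: power2_eq_square)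
    also have "inner (t1 *\<^sub>R u + t2 *\<^sub>R v + t3 *\<^sub>R w) (t1 *\<^sub>R u + t2 *\<^sub>R v + t3 *\<^sub>R w)
       = t1\<^sup>2 * inner u u + t2\<^sup>2 * inner v v + t3\<^sup>2 * inner w w
       + 2*t1*t2*inner u v + 2*t1*t3*inner u w + 2*t2*t3*inner v w"
      by (simp add: inner_add_left inner_add_right inner_commute[of v u] inner_commute[of w u]
          inner_commute[of w v] power2_eq_square algebra_simps)
    finally show ?thesis by (simp add: power_divide)
  qed
  have num: "R\<^sup>2 * t\<^sup>2 - (t1\<^sup>2 * inner u u + t2\<^sup>2 * inner v v + t3\<^sup>2 * inner w w
       + 2*t1*t2*inner u v + 2*t1*t3*inner u w + 2*t2*t3*inner v w)
     = t2*t3*a\<^sup>2 + t1*t3*b\<^sup>2 + t1*t2*c\<^sup>2"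
    unfolding a2 b2 c2 uu vv ww t_def by (simp add: algebra_simps power2_eq_square)
  have main: "R\<^sup>2 - (dist Oc P)\<^sup>2 = (t2*t3*a\<^sup>2 + t1*t3*b\<^sup>2 + t1*t2*c\<^sup>2) / t\<^sup>2"
    unfolding OP2 num[symmetric] using tpos by (simp add: diff_divide_distrib)
  have rhs: "4 * ((a+b+c)/2)\<^sup>2 * t1*t2*t3 / t^3 = (a+b+c)\<^sup>2 * t1*t2*t3 / t^3"
    by (simp add: power2_eq_square)
  define D where "D = t3 * (a*t2 - b*t1)\<^sup>2 + t2 * (a*t3 - c*t1)\<^sup>2 + t1 * (b*t3 - c*t2)\<^sup>2"
  have diff: "R\<^sup>2 - (dist Oc P)\<^sup>2 - (a+b+c)\<^sup>2 * t1*t2*t3 / t^3 = D / t^3"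
  proof -
    have "R\<^sup>2 - (dist Oc P)\<^sup>2 - (a+b+c)\<^sup>2 * t1*t2*t3 / t^3
      = (t * (t2*t3*a\<^sup>2 + t1*t3*b\<^sup>2 + t1*t2*c\<^sup>2) - (a+b+c)\<^sup>2 * t1*t2*t3) / t^3"
      unfolding main using tpos by (simp add: field_simps power2_eq_square power3_eq_cube)
    also have "\<dots> = D / t^3" unfolding D_def t_def using key_ineq[OF pos] by simp
    finally show ?thesis .
  qed
  have Dge: "D \<ge> 0" unfolding D_def using pos by (intro add_nonneg_nonneg mult_nonneg_nonneg) auto
  have ane: "a \<noteq> 0"
  proof
    assume "a = 0" hence "B = C" unfolding a_def by simp
    thus False using triangle by (simp add: collinear_2 insert_commute)
  qed
  have apos: "a > 0" using ane a_def by simp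
  have eqiff: "D = 0 \<longleftrightarrow> (\<exists>k > 0. t1 = k * a \<and> t2 = k * b \<and> t3 = k * c)"
  proof
    assume "D = 0"
    hence z: "t3 * (a*t2 - b*t1)\<^sup>2 = 0" "t2 * (a*t3 - c*t1)\<^sup>2 = 0" "t1 * (b*t3 - c*t2)\<^sup>2 = 0"
    proof -
      have n1: "t3 * (a*t2 - b*t1)\<^sup>2 \<ge> 0" "t2 * (a*t3 - c*t1)\<^sup>2 \<ge> 0" "t1 * (b*t3 - c*t2)\<^sup>2 \<ge> 0"
        using pos by simp_all
      show "t3 * (a*t2 - b*t1)\<^sup>2 = 0" "t2 * (a*t3 - c*t1)\<^sup>2 = 0" "t1 * (b*t3 - c*t2)\<^sup>2 = 0"
        using n1 \<open>D = 0\<close> unfolding D_def by linarith+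
    qed
    hence e1: "a*t2 = b*t1" "a*t3 = c*t1" using pos by auto
    show "\<exists>k > 0. t1 = k * a \<and> t2 = k * b \<and> t3 = k * c"
    proof (intro exI[of _ "t1/a"] conjI)
      show "t1/a > 0" using pos apos by simp
      show "t1 = t1/a * a" using ane by simp
      show "t2 = t1/a * b" using e1 ane by (simp add: field_simps)
      show "t3 = t1/a * c" using e1 ane by (simp add: field_simps)
    qed
  next
    assume "\<exists>k > 0. t1 = k * a \<and> t2 = k * b \<and> t3 = k * c"
    then obtain k where "t1 = k*a" "t2 = k*b" "t3 = k*c" by blast
    thus "D = 0" unfolding D_def by (simp add: algebra_simps)
  qed
  have t3pos: "t^3 > 0" using tpos by simp
  have q: "D / t^3 \<ge> 0" using Dge t3pos by simp
  have q2: "D / t^3 = 0 \<longleftrightarrow> D = 0" using t3pos by simp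
  have fin: "R\<^sup>2 - (dist Oc P)\<^sup>2 \<ge> (a+b+c)\<^sup>2 * t1*t2*t3 / t^3 \<and>
     (R\<^sup>2 - (dist Oc P)\<^sup>2 = (a+b+c)\<^sup>2 * t1*t2*t3 / t^3 \<longleftrightarrow>
      (\<exists>k > 0. t1 = k * a \<and> t2 = k * b \<and> t3 = k * c))"
  proof -
    have "R\<^sup>2 - (dist Oc P)\<^sup>2 = (a+b+c)\<^sup>2 * t1*t2*t3 / t^3 \<longleftrightarrow> D / t^3 = 0"
      using diff by linarith
    moreover have "R\<^sup>2 - (dist Oc P)\<^sup>2 \<ge> (a+b+c)\<^sup>2 * t1*t2*t3 / t^3" using diff q by linarith
    ultimately show ?thesis using q2 eqiff by blast
  qed
  have rr: "4 * ((dist B C + dist C A + dist A B) / 2)\<^sup>2 * t1 * t2 * t3 / (t1 + t2 + t3) ^ 3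
     = (a+b+c)\<^sup>2 * t1*t2*t3 / t^3" using rhs unfolding a_def b_def c_def t_def .
  show ?thesis
    unfolding rr using fin unfolding a_def b_def c_def .
qed

end
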